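(* Let $X$ be a complete metric space, $f : X \to X$ a continuous map and $x \in X$. Then the following are equivalent: (i) The map $f{\uparrow}_x : \mathbb{N} \to X$, $n \mapsto f^n(x)$, can be extended to a continuous map $\widehat{f{\uparrow}_x} : \widehat{\mathbb{N}} \to X$. (ii) For every $s \in \widehat{\mathbb{Z}}$ and every sequence of positive integers $(n_i)_{i \in \mathbb{N}}$ with $n_i \to +\infty$ in $\mathbb{R}$ and $\widehat{n_i} \to s$ in $\widehat{\mathbb{Z}}$ as $i \to \infty$, the limit $\lim_{i \to \infty} f^{n_i}(x)$ exists in $X$ and depends only on $s$.
   Context: $\mathbb{N} = \{1,2,3,\dots\}$, $f^n$ is the $n$-th iterate of $f$, $\widehat{\mathbb{Z}} = \varprojlim_n \mathbb{Z}/n\mathbb{Z}$, and $\widehat{\cdot}:\mathbb{N} \to \widehat{\mathbb{Z}}$ is the natural embedding. $\widehat{\mathbb{N}}$ is the profinite completion of $(\mathbb{N},+)$: the projective limit (with projective limit topology, each term discrete) of the finite semigroups $\mathbb{Z}_{m,n}$ with underlying set $\{1,\dots,m-1\} \sqcup \mathbb{Z}/n\mathbb{Z}$ and quotient maps $\pi_{m,n}:\mathbb{N} \to \mathbb{Z}_{m,n}$ ($a \mapsto a$ if $a<m$, $a \mapsto a \bmod n$ if $a\ge m$). As a set $\widehat{\mathbb{N}} = \mathbb{N} \sqcup \widehat{\mathbb{Z}}$, $\mathbb{N}$ embeds via $n \mapsto (\pi_{m,n}(n))$, and a sequence of positive integers $(n_i)$ converges to $s \in \widehat{\mathbb{Z}}$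 in $\widehat{\mathbb{N}}$ iff $n_i \to \infty$ in $\mathbb{R}$ and $\widehat{n_i} \to s$ in $\widehat{\mathbb{Z}}$. *)

theory Defs
  imports "HOL-Analysis.Analysis"
begin

text \<open>Zhat is the projective limit of the discrete finite rings Z/nZ (n >= 1),
 realised as the set of compatible families of residues, with the subspace topology
 of the product of discrete spaces.\<close>

definition Zhat_index :: "nat set" where
  "Zhat_index = {n. 0 < n}"

definition Zhat :: "(nat \<Rightarrow> nat) set" where
  "Zhat = {s \<in> PiE Zhat_index (\<lambda>n. {0..<n}).
            \<forall>n\<in>Zhat_index. \<forall>k\<in>Zhat_index. n dvd k \<longrightarrow> s n = s k mod n}"

definition Zhat_top :: "(nat \<Rightarrow> nat) topology" where
  "Zhat_top = subtopology (product_topology (\<lambda>n. discrete_topology {0..<n}) Zhat_index) Zhat"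

definition zhat_of :: "nat \<Rightarrow> (nat \<Rightarrow> nat)" where
  "zhat_of k = restrict (\<lambda>n. k mod n) Zhat_index"

text \<open>Index set: pairs (m,n) of positive integers. The finite semigroup Z_{m,n}
 has underlying set {1..m-1} disjoint-union Z/nZ, represented as Inl a (1 <= a < m)
 and Inr r (0 <= r < n).\<close>

definition Nhat_index :: "(nat \<times> nat) set" where
  "Nhat_index = {(m, n). 0 < m \<and> 0 < n}"

definition Zmn :: "nat \<Rightarrow> nat \<Rightarrow> (nat + nat) set" where
  "Zmn m n = Inl ` {1..<m} \<union> Inr ` {0..<n}"

definition pi_mn :: "nat \<Rightarrow> nat \<Rightarrow> nat \<Rightarrow> nat + nat" where
  "pi_mn m n a = (if a < m then Inl a else Inr (a mod n))"

fun bond :: "nat \<Rightarrow> nat \<Rightarrow> nat + nat \<Rightarrow> nat + nat" where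
  "bond m n (Inl a) = pi_mn m n a"
| "bond m n (Inr r) = Inr (r mod n)"

definition Nhat :: "(nat \<times> nat \<Rightarrow> nat + nat) set" where
  "Nhat = {u \<in> PiE Nhat_index (\<lambda>(m, n). Zmn m n).
            \<forall>m n m' n'. (m, n) \<in> Nhat_index \<longrightarrow> (m', n') \<in> Nhat_index \<longrightarrow>
               m \<le> m' \<longrightarrow> n dvd n' \<longrightarrow> u (m, n) = bond m n (u (m', n'))}"

definition Nhat_top :: "(nat \<times> nat \<Rightarrow> nat + nat) topology" where
  "Nhat_top = subtopology
     (product_topology (\<lambda>(m, n). discrete_topology (Zmn m n)) Nhat_index) Nhat"

definition nhat_of :: "nat \<Rightarrow> (nat \<times> nat \<Rightarrow> nat + nat)" where
  "nhat_of k = restrict (\<lambda>(m, n). pi_mn m n k) Nhat_index"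

end

theory Submission
  imports Defs
begin

definition uhat :: "(nat\<Rightarrow>nat) \<Rightarrow> (nat\<times>nat \<Rightarrow> nat+nat)" where
  "uhat s = restrict (\<lambda>(m,n). Inr (s n)) Nhat_index"
definition zh :: "(nat\<times>nat \<Rightarrow> nat+nat) \<Rightarrow> (nat\<Rightarrow>nat)" where
  "zh u = restrict (\<lambda>n. projr (u (1,n))) Zhat_index"

lemma Zhat_PiE: "s \<in> Zhat \<Longrightarrow> s \<in> PiE Zhat_index (\<lambda>n. {0..<n})"
  unfolding Zhat_def by blast
lemma Zhat_lt: "s \<in> Zhat \<Longrightarrow> 0<n \<Longrightarrow> s n < n"
  using PiE_mem[OF Zhat_PiE, of s n] by (simp add: Zhat_index_def)
lemma Zhat_compat: "s \<in> Zhat \<Longrightarrow> 0<n \<Longrightarrow> 0<k \<Longrightarrow> n dvd k \<Longrightarrow> s n = s k mod n"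
  unfolding Zhat_def Zhat_index_def by blast
lemma Zhat_ext: "s \<in> Zhat \<Longrightarrow> s \<in> extensional Zhat_index"
  using Zhat_PiE PiE_iff by blast
lemma Zhat_I:
  assumes "s \<in> extensional Zhat_index" "\<And>n. 0<n \<Longrightarrow> s n < n"
    "\<And>n k. 0<n \<Longrightarrow> 0<k \<Longrightarrow> n dvd k \<Longrightarrow> s n = s k mod n"
  shows "s \<in> Zhat"
proof -
  have "s \<in> PiE Zhat_index (\<lambda>n. {0..<n})"
    using assms(1,2) by (auto simp: PiE_iff Zhat_index_def)
  then show ?thesis unfolding Zhat_def Zhat_index_def using assms(3) by blast
qed
lemma Nhat_PiE: "u \<in> Nhat \<Longrightarrow> u \<in> PiE Nhat_index (\<lambda>(m,n). Zmn m n)"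
  unfolding Nhat_def by blast
lemma Nhat_Zmn: "u \<in> Nhat \<Longrightarrow> 0<m \<Longrightarrow> 0<n \<Longrightarrow> u (m,n) \<in> Zmn m n"
  using PiE_mem[OF Nhat_PiE, of u "(m,n)"] by (simp add: Nhat_index_def)
lemma Nhat_compat: "u \<in> Nhat \<Longrightarrow> 0<m \<Longrightarrow> 0<n \<Longrightarrow> 0<m' \<Longrightarrow> 0<n' \<Longrightarrow> m \<le> m' \<Longrightarrow> n dvd n'
   \<Longrightarrow> u (m,n) = bond m n (u (m',n'))"
  unfolding Nhat_def Nhat_index_def by blast
lemma Nhat_arb: "u \<in> Nhat \<Longrightarrow> p \<notin> Nhat_index \<Longrightarrow> u p = undefined"
  using Nhat_PiE PiE_arb by blast

lemma topspace_Nhat: "topspace Nhat_top = Nhat"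
proof -
  have e: "(\<lambda>i. topspace (case i of (m,n) \<Rightarrow> discrete_topology (Zmn m n))) = (\<lambda>(m,n). Zmn m n)"
    by (rule ext) (simp split: prod.split)
  show ?thesis
    unfolding Nhat_top_def topspace_subtopology topspace_product_topology e
    unfolding Nhat_def by blast
qed

lemma topspace_Zhat: "topspace Zhat_top = Zhat"
  unfolding Zhat_top_def Zhat_def by auto

lemma nhat_of_in: "0 < k \<Longrightarrow> nhat_of k \<in> Nhat"
  unfolding Nhat_def nhat_of_def Nhat_index_def Zmn_def
  by (auto simp: pi_mn_def mod_mod_cancel)

lemma uhat_in:
  assumes s: "s \<in> Zhat"
  shows "uhat s \<in> Nhat"
proof -
  have sn: "\<And>n. 0<n \<Longrightarrow> s n < n" using s Zhat_lt by blast
  have sc: "\<And>n k. 0<n \<Longrightarrow> 0<k \<Longrightarrow> n dvd k \<Longrightarrow> s n = s k mod n"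
    using s Zhat_compat by blast
  have "uhat s \<in> PiE Nhat_index (\<lambda>(m, n). Zmn m n)"
    unfolding uhat_def restrict_PiE_iff
  proof
    fix p assume "p \<in> Nhat_index"
    then obtain m n where "p = (m,n)" "0 < m" "0 < n" unfolding Nhat_index_def by auto
    then show "(case p of (m, n) \<Rightarrow> Inr (s n)) \<in> (case p of (m, n) \<Rightarrow> Zmn m n)"
      using sn unfolding Zmn_def by auto
  qed
  moreover have "uhat s (m, n) = bond m n (uhat s (m', n'))"
    if "(m, n) \<in> Nhat_index" "(m', n') \<in> Nhat_index" "n dvd n'" for m n m' n'
    using that sc[of n n'] unfolding uhat_def Nhat_index_def by simp
  ultimately show ?thesis unfolding Nhat_def by blast
qed

lemma zhat_of_in: "zhat_of k \<in> Zhat"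
  by (rule Zhat_I) (auto simp: zhat_of_def Zhat_index_def mod_mod_cancel)

lemma Nhat_Inl:
  assumes u: "u \<in> Nhat" and m: "0 < m" and ua: "u (m,1) = Inl a"
  shows "u = nhat_of a \<and> 0 < a"
proof -
  have uZ: "u (m,1) \<in> Zmn m 1" using Nhat_Zmn[OF u m, of 1] by simp
  hence a: "1 \<le> a" "a < m" using ua unfolding Zmn_def by auto
  have compat: "\<And>m n m' n'. 0<m \<Longrightarrow> 0<n \<Longrightarrow> 0<m' \<Longrightarrow> 0<n' \<Longrightarrow> m \<le> m' \<Longrightarrow> n dvd n'
      \<Longrightarrow> u (m,n) = bond m n (u (m',n'))"
    using u Nhat_compat by blast
  have "u p = nhat_of a p" for p
  proof (cases "p \<in> Nhat_index")
    case False
    then show ?thesis using Nhat_arb[OF u False] unfolding nhat_of_def by auto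
  next
    case True
    then obtain m' n' where p: "p = (m',n')" "0<m'" "0<n'" unfolding Nhat_index_def by auto
    define M where "M = max m m'"
    have e1: "u (m,1) = bond m 1 (u (M,n'))" using compat[of m 1 M n'] m p unfolding M_def by auto
    have "u (M,n') = Inl a"
    proof (cases "u (M,n')")
      case (Inl b)
      then show ?thesis using e1 ua by (auto simp: pi_mn_def split: if_splits)
    next
      case (Inr r)
      then show ?thesis using e1 ua by auto
    qed
    moreover have "u (m',n') = bond m' n' (u (M,n'))" using compat[of m' n' M n'] m p unfolding M_def by auto
    ultimately show ?thesis using True p a unfolding nhat_of_def by auto
  qed
  then show ?thesis using a by auto
qed

lemma Nhat_Inr:
  assumes u: "u \<in> Nhat" and nl: "\<And>m a. 0 < m \<Longrightarrow> u (m,1) \<noteq> Inl a"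
  shows "u = uhat (zh u) \<and> zh u \<in> Zhat"
proof -
  have compat: "\<And>m n m' n'. 0<m \<Longrightarrow> 0<n \<Longrightarrow> 0<m' \<Longrightarrow> 0<n' \<Longrightarrow> m \<le> m' \<Longrightarrow> n dvd n'
      \<Longrightarrow> u (m,n) = bond m n (u (m',n'))"
    using u Nhat_compat by blast
  have inZ: "\<And>m n. 0<m \<Longrightarrow> 0<n \<Longrightarrow> u (m,n) \<in> Zmn m n"
    using u Nhat_Zmn by blast
  have R: "u (m,n) = Inr (projr (u (1,n))) \<and> projr (u (1,n)) < n" if mn: "0<m" "0<n" for m n
  proof -
    have e1: "u (m,1) = bond m 1 (u (m,n))" using compat[of m 1 m n] mn by auto
    obtain r where r: "u (m,n) = Inr r" "r < n"
    proof (cases "u (m,n)")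
      case (Inl b)
      then have "b < m" using inZ[OF mn] unfolding Zmn_def by auto
      then show ?thesis using e1 Inl nl[OF mn(1)] by (auto simp: pi_mn_def)
    next
      case (Inr r)
      then show ?thesis using that inZ[OF mn] unfolding Zmn_def by auto
    qed
    have "u (1,n) = bond 1 n (u (m,n))" using compat[of 1 n m n] mn by auto
    then have "u (1,n) = Inr r" using r by auto
    then show ?thesis using r by auto
  qed
  have "u p = uhat (zh u) p" for p
  proof (cases "p \<in> Nhat_index")
    case False
    then show ?thesis using Nhat_arb[OF u False] unfolding uhat_def by auto
  next
    case True
    then obtain m n where p: "p = (m,n)" "0<m" "0<n" unfolding Nhat_index_def by auto
    then show ?thesis using R[OF p(2,3)] True unfolding uhat_def zh_def Zhat_index_def by auto
  qed
  moreover have "zh u \<in> Zhat"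
  proof -
    have c1: "zh u n = zh u k mod n" if "0<n" "0<k" "n dvd k" for n k
    proof -
      have b: "u (1,n) = bond 1 n (u (1,k))" using compat[of 1 n 1 k] that by auto
      have Rk: "u (1,k) = Inr (projr (u (1,k)))" using conjunct1[OF R[OF zero_less_one that(2)]] .
      define r where "r = projr (u (1,k))"
      have "u (1,n) = Inr (r mod n)" using b Rk unfolding r_def by (metis bond.simps(2))
      then show ?thesis unfolding zh_def Zhat_index_def using that r_def by simp
    qed
    have c2: "zh u n < n" if "0<n" for n
      using conjunct2[OF R[OF zero_less_one that]] that unfolding zh_def Zhat_index_def by simp
    show ?thesis
    proof (rule Zhat_I)
      show "zh u \<in> extensional Zhat_index" unfolding zh_def by simp
      show "\<And>n. 0<n \<Longrightarrow> zh u n < n" by (rule c2)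
      show "\<And>n k. 0<n \<Longrightarrow> 0<k \<Longrightarrow> n dvd k \<Longrightarrow> zh u n = zh u k mod n" by (rule c1)
    qed
  qed
  ultimately show ?thesis by auto
qed

lemma limitin_discrete:
  "limitin (discrete_topology U) f l F \<longleftrightarrow> l \<in> U \<and> eventually (\<lambda>i. f i = l) F"
proof
  assume "limitin (discrete_topology U) f l F"
  then show "l \<in> U \<and> eventually (\<lambda>i. f i = l) F"
    unfolding limitin_def by (auto dest: spec[of _ "{l}"])
next
  assume "l \<in> U \<and> eventually (\<lambda>i. f i = l) F"
  then show "limitin (discrete_topology U) f l F"
    unfolding limitin_def by (auto elim: eventually_mono)
qed

lemma limit_Zhat:
  "limitin Zhat_top (\<lambda>i. zhat_of (ns i)) s sequentially \<longleftrightarrow>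
     s \<in> Zhat \<and> (\<forall>q>0. eventually (\<lambda>i. ns i mod q = s q) sequentially)"
proof -
  have "s \<in> Zhat \<Longrightarrow> s \<in> extensional Zhat_index" using Zhat_ext by blast
  moreover have "\<And>i. zhat_of (ns i) \<in> topspace (product_topology (\<lambda>n. discrete_topology {0..<n}) Zhat_index)"
    using zhat_of_in Zhat_PiE by auto
  moreover have "s \<in> Zhat \<Longrightarrow> q > 0 \<Longrightarrow> s q < q" for q using Zhat_lt by blast
  ultimately show ?thesis
    unfolding Zhat_top_def limitin_subtopology limitin_componentwise limitin_discrete
    using zhat_of_in by (auto simp: zhat_of_def Zhat_index_def)
qed

lemma limit_Nhat:
  assumes s: "s \<in> Zhat" and pos: "\<forall>i. 0 < ns i" and inf: "filterlim ns at_top sequentially"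
    and ev: "\<forall>q>0. eventually (\<lambda>i. ns i mod q = s q) sequentially"
  shows "limitin Nhat_top (\<lambda>i. nhat_of (ns i)) (uhat s) sequentially"
proof -
  have "uhat s \<in> extensional Nhat_index" unfolding uhat_def by auto
  moreover have "\<And>i. nhat_of (ns i) \<in> topspace (product_topology (\<lambda>(m, n). discrete_topology (Zmn m n)) Nhat_index)"
  proof -
    have "Nhat \<subseteq> topspace (product_topology (\<lambda>(m, n). discrete_topology (Zmn m n)) Nhat_index)"
      using topspace_Nhat unfolding Nhat_top_def topspace_subtopology by blast
    then show "\<And>i. nhat_of (ns i) \<in> topspace (product_topology (\<lambda>(m, n). discrete_topology (Zmn m n)) Nhat_index)"
      using nhat_of_in pos by blast
  qed
  moreover have "limitin (case p of (m,n) \<Rightarrow> discrete_topology (Zmn m n)) (\<lambda>c. nhat_of (ns c) p) (uhat s p) sequentially"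
    if p: "p \<in> Nhat_index" for p
  proof -
    obtain m n where mn: "p = (m,n)" "0<m" "0<n" using p unfolding Nhat_index_def by auto
    have "eventually (\<lambda>i. ns i \<ge> m) sequentially" using inf by (simp add: filterlim_at_top)
    moreover have "eventually (\<lambda>i. ns i mod n = s n) sequentially" using ev mn(3) by blast
    ultimately have "eventually (\<lambda>i. nhat_of (ns i) p = uhat s p) sequentially"
      unfolding nhat_of_def uhat_def
      by eventually_elim (use mn p in \<open>auto simp: pi_mn_def\<close>)
    moreover have "uhat s p \<in> Zmn m n" using uhat_in[OF s] mn Nhat_Zmn by blast
    ultimately show ?thesis using mn by (simp add: limitin_discrete)
  qed
  ultimately show ?thesis
    unfolding Nhat_top_def limitin_subtopology limitin_componentwise
    using uhat_in[OF s] nhat_of_in pos by auto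
qed


lemma open_basic:
  assumes p: "p \<in> Nhat_index"
  shows "openin Nhat_top {v \<in> Nhat. v p = c}"
proof -
  let ?P = "product_topology (\<lambda>(m, n). discrete_topology (Zmn m n)) Nhat_index"
  have "openin ?P {v \<in> topspace ?P. v p \<in> {c} \<inter> Zmn (fst p) (snd p)}"
    by (rule openin_continuous_map_preimage[OF continuous_map_product_projection[OF p]])
       (auto simp: case_prod_beta)
  then have "openin Nhat_top ({v \<in> topspace ?P. v p \<in> {c} \<inter> Zmn (fst p) (snd p)} \<inter> Nhat)"
    unfolding Nhat_top_def by (rule openin_subtopology_Int)
  moreover have "{v \<in> topspace ?P. v p \<in> {c} \<inter> Zmn (fst p) (snd p)} \<inter> Nhat = {v \<in> Nhat. v p = c}"
  proof -
    have "topspace ?P \<inter> Nhat = Nhat" using topspace_Nhat unfolding Nhat_top_def by simp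
    moreover have "v \<in> Nhat \<Longrightarrow> v p \<in> Zmn (fst p) (snd p)" for v
      using p Nhat_Zmn[of v "fst p" "snd p"] unfolding Nhat_index_def by auto
    ultimately show ?thesis by blast
  qed
  ultimately show ?thesis by simp
qed

lemma Zhat_seq:
  assumes t: "t \<in> Zhat"
  shows "\<exists>ns. (\<forall>i. 0 < ns i) \<and> filterlim ns at_top sequentially \<and>
              (\<forall>q>0. eventually (\<lambda>i. ns i mod q = t q) sequentially)"
proof -
  define c where "c i = t (fact (Suc i)) + fact (Suc i) * Suc i" for i
  have ge: "c i \<ge> Suc i" for i
  proof -
    have f1: "(1::nat) \<le> fact (Suc i)" by (rule fact_ge_1)
    have "Suc i \<le> fact (Suc i) * Suc i" using mult_le_mono1[OF f1, of "Suc i"] by (simp del: fact_Suc)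
    then show ?thesis unfolding c_def by linarith
  qed
  have "filterlim c at_top sequentially"
    unfolding filterlim_at_top eventually_sequentially
    by (meson ge le_trans Suc_leD)
  moreover have "\<forall>q>0. eventually (\<lambda>i. c i mod q = t q) sequentially"
  proof (intro allI impI)
    fix q :: nat assume q: "0 < q"
    show "eventually (\<lambda>i. c i mod q = t q) sequentially"
      unfolding eventually_sequentially
    proof (intro exI allI impI)
      fix i assume "q \<le> i"
      then have d: "q dvd fact (Suc i)" using q by (intro dvd_fact) auto
      have "q dvd fact (Suc i) * Suc i" using d by (rule dvd_mult2)
      then obtain r where r: "fact (Suc i) * Suc i = q * r" by (elim dvdE)
      have "c i mod q = t (fact (Suc i)) mod q"
        unfolding c_def r by (simp del: fact_Suc)
      also have "\<dots> = t q" using Zhat_compat[OF t q _ d] by simp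
      finally show "c i mod q = t q" .
    qed
  qed
  ultimately show ?thesis using ge by (intro exI[of _ c]) (auto intro: less_le_trans)
qed

lemma nhat_of_inj: "0 < a \<Longrightarrow> 0 < b \<Longrightarrow> nhat_of a = nhat_of b \<Longrightarrow> a = b"
proof -
  assume a: "0 < a" "0 < b" "nhat_of a = nhat_of b"
  then have "nhat_of a (a+1,1) = nhat_of b (a+1,1)" by simp
  then show "a = b" using a unfolding nhat_of_def Nhat_index_def
    by (auto simp: pi_mn_def split: if_splits)
qed

lemma uhat_not_nhat: "uhat s \<noteq> nhat_of k"
proof
  assume "uhat s = nhat_of k"
  then have "uhat s (k+1,1) = nhat_of k (k+1,1)" by simp
  then show False unfolding uhat_def nhat_of_def Nhat_index_def by (auto simp: pi_mn_def)
qed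

lemma zh_uhat:
  assumes s: "s \<in> Zhat" shows "zh (uhat s) = s"
proof
  fix n show "zh (uhat s) n = s n"
  proof (cases "n \<in> Zhat_index")
    case True then show ?thesis unfolding zh_def uhat_def Zhat_index_def Nhat_index_def by auto
  next
    case False then show ?thesis using Zhat_ext[OF s] unfolding zh_def extensional_def by auto
  qed
qed

theorem corollary2p3:
  fixes f :: "'a::{metric_space, complete_space} \<Rightarrow> 'a" and x :: 'a
  assumes "continuous_on UNIV f"
  shows "(\<exists>g. continuous_map Nhat_top euclidean g \<and>
              (\<forall>k::nat. 0 < k \<longrightarrow> g (nhat_of k) = (f ^^ k) x))
     \<longleftrightarrow>
         (\<forall>s\<in>Zhat. \<exists>L. \<forall>ns :: nat \<Rightarrow> nat.
              (\<forall>i. 0 < ns i) \<and> filterlim ns at_top sequentially \<and>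
              limitin Zhat_top (\<lambda>i. zhat_of (ns i)) s sequentially
              \<longrightarrow> ((\<lambda>i. (f ^^ ns i) x) \<longlonglongrightarrow> L))"
proof
  assume "\<exists>g. continuous_map Nhat_top euclidean g \<and>
              (\<forall>k::nat. 0 < k \<longrightarrow> g (nhat_of k) = (f ^^ k) x)"
  then obtain g where g: "continuous_map Nhat_top euclidean g"
     and gk: "\<And>k. 0 < k \<Longrightarrow> g (nhat_of k) = (f ^^ k) x" by blast
  show "\<forall>s\<in>Zhat. \<exists>L. \<forall>ns :: nat \<Rightarrow> nat.
              (\<forall>i. 0 < ns i) \<and> filterlim ns at_top sequentially \<and>
              limitin Zhat_top (\<lambda>i. zhat_of (ns i)) s sequentially
              \<longrightarrow> ((\<lambda>i. (f ^^ ns i) x) \<longlonglongrightarrow> L)"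
  proof (intro ballI exI allI impI)
    fix s ns assume s: "s \<in> Zhat" and H: "(\<forall>i. 0 < ns i) \<and> filterlim ns at_top sequentially \<and>
              limitin Zhat_top (\<lambda>i. zhat_of (ns i)) s sequentially"
    then have "limitin Nhat_top (\<lambda>i. nhat_of (ns i)) (uhat s) sequentially"
      using limit_Nhat limit_Zhat by blast
    from continuous_map_limit[OF g this]
    have "((\<lambda>i. g (nhat_of (ns i))) \<longlonglongrightarrow> g (uhat s))" by (simp add: o_def)
    moreover have "g (nhat_of (ns i)) = (f ^^ ns i) x" for i using H gk by auto
    ultimately show "((\<lambda>i. (f ^^ ns i) x) \<longlonglongrightarrow> g (uhat s))" by simp
  qed
next
  assume "\<forall>s\<in>Zhat. \<exists>L. \<forall>ns :: nat \<Rightarrow> nat.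
              (\<forall>i. 0 < ns i) \<and> filterlim ns at_top sequentially \<and>
              limitin Zhat_top (\<lambda>i. zhat_of (ns i)) s sequentially
              \<longrightarrow> ((\<lambda>i. (f ^^ ns i) x) \<longlonglongrightarrow> L)"
  then obtain Lf where LfH: "\<And>s ns. s \<in> Zhat \<Longrightarrow> (\<forall>i. 0 < ns i) \<Longrightarrow> filterlim ns at_top sequentially \<Longrightarrow>
              (\<forall>q>0. eventually (\<lambda>i. ns i mod q = s q) sequentially)
              \<Longrightarrow> ((\<lambda>i. (f ^^ ns i) x) \<longlonglongrightarrow> Lf s)"
    unfolding limit_Zhat by metis
  have A: "\<exists>N. \<forall>n. N < n \<and> n mod fact N = s (fact N) \<longrightarrow> dist ((f ^^ n) x) (Lf s) < e"
    if s: "s \<in> Zhat" and e: "0 < e" for s e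
  proof (rule ccontr)
    assume "\<not> ?thesis"
    then have "\<forall>N. \<exists>n. N < n \<and> n mod fact N = s (fact N) \<and> \<not> dist ((f ^^ n) x) (Lf s) < e"
      by blast
    then obtain nn where nn: "\<And>N. N < nn N" "\<And>N. nn N mod fact N = s (fact N)"
       "\<And>N. \<not> dist ((f ^^ nn N) x) (Lf s) < e" by metis
    have "filterlim nn at_top sequentially"
      unfolding filterlim_at_top eventually_sequentially
      by (meson nn(1) le_trans less_imp_le)
    moreover have "\<forall>q>0. eventually (\<lambda>i. nn i mod q = s q) sequentially"
    proof (intro allI impI)
      fix q :: nat assume q: "0 < q"
      show "eventually (\<lambda>i. nn i mod q = s q) sequentially"
        unfolding eventually_sequentially
      proof (intro exI allI impI)
        fix i assume "q \<le> i"
        then have d: "q dvd fact i" using q by (intro dvd_fact) auto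
        have "nn i mod q = (nn i mod fact i) mod q" using d by (simp add: mod_mod_cancel)
        also have "\<dots> = s (fact i) mod q" using nn(2) by simp
        also have "\<dots> = s q" using Zhat_compat[OF s q _ d] by simp
        finally show "nn i mod q = s q" .
      qed
    qed
    moreover have "\<forall>i. 0 < nn i" using nn(1) by (meson le_less_trans zero_le)
    ultimately have "((\<lambda>i. (f ^^ nn i) x) \<longlonglongrightarrow> Lf s)" using LfH s by blast
    then have "eventually (\<lambda>i. dist ((f ^^ nn i) x) (Lf s) < e) sequentially"
      using e tendstoD by blast
    then show False using nn(3) by (simp add: eventually_sequentially)
  qed
  define g where "g u = (if \<exists>k>0. u = nhat_of k then (f ^^ (SOME k. 0 < k \<and> u = nhat_of k)) x
       else Lf (zh u))" for u
  have gk: "g (nhat_of k) = (f ^^ k) x" if "0 < k" for k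
  proof -
    have "(SOME j. 0 < j \<and> nhat_of k = nhat_of j) = k"
      using that nhat_of_inj by (intro some_equality) auto
    moreover have "\<exists>j>0. nhat_of k = nhat_of j" using that by blast
    ultimately show ?thesis unfolding g_def by simp
  qed
  have gs: "g (uhat s) = Lf s" if "s \<in> Zhat" for s
    unfolding g_def using uhat_not_nhat zh_uhat[OF that] by auto
  have "continuous_map Nhat_top euclidean g"
    unfolding continuous_map_eq_topcontinuous_at topcontinuous_at_def
  proof (intro ballI conjI allI impI)
    fix u V assume u: "u \<in> topspace Nhat_top" and V: "openin euclidean V \<and> g u \<in> V"
    then have uN: "u \<in> Nhat" by (simp add: topspace_Nhat)
    obtain e where e: "0 < e" "ball (g u) e \<subseteq> V" using V by (auto simp: open_contains_ball)
    show "\<exists>U. openin Nhat_top U \<and> u \<in> U \<and> (\<forall>y\<in>U. g y \<in> V)"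
    proof (cases "\<exists>m a. 0 < m \<and> u (m,1) = Inl a")
      case True
      then obtain m a where ma: "0 < m" "u (m,1) = Inl a" by blast
      then have ua: "u = nhat_of a" "0 < a" using Nhat_Inl[OF uN] by auto
      show ?thesis
      proof (intro exI conjI ballI)
        show "openin Nhat_top {v \<in> Nhat. v (m,1) = Inl a}"
          by (rule open_basic) (use ma in \<open>auto simp: Nhat_index_def\<close>)
        show "u \<in> {v \<in> Nhat. v (m,1) = Inl a}" using uN ma by auto
        fix v assume "v \<in> {v \<in> Nhat. v (m,1) = Inl a}"
        then have "v = u" using Nhat_Inl[of v m a] ma ua by auto
        then show "g v \<in> V" using V by simp
      qed
    next
      case False
      then have "\<And>m a. 0 < m \<Longrightarrow> u (m,1) \<noteq> Inl a" by blast
      then have us: "u = uhat (zh u)" "zh u \<in> Zhat" using Nhat_Inr[OF uN] by blast+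
      define s where "s = zh u"
      have e2: "0 < e/2" using e by simp
      obtain N where N: "\<And>n. N < n \<Longrightarrow> n mod fact N = s (fact N) \<Longrightarrow> dist ((f ^^ n) x) (Lf s) < e/2"
        using A[OF us(2)[folded s_def] e2] by blast
      have gu: "g u = Lf s" using gs us unfolding s_def by metis
      have pidx: "(Suc N, fact N) \<in> Nhat_index" unfolding Nhat_index_def by auto
      show ?thesis
      proof (intro exI conjI ballI)
        show "openin Nhat_top {v \<in> Nhat. v (Suc N, fact N) = Inr (s (fact N))}"
          by (rule open_basic[OF pidx])
        show "u \<in> {v \<in> Nhat. v (Suc N, fact N) = Inr (s (fact N))}"
        proof -
          have "uhat s (Suc N, fact N) = Inr (s (fact N))" using pidx unfolding uhat_def by simp
          moreover have "u = uhat s" using us(1) unfolding s_def .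
          ultimately show ?thesis using uN by simp
        qed
        fix v assume v: "v \<in> {v \<in> Nhat. v (Suc N, fact N) = Inr (s (fact N))}"
        have "dist (g v) (Lf s) < e"
        proof (cases "\<exists>m a. 0 < m \<and> v (m,1) = Inl a")
          case True
          then obtain m a where ma: "0 < m" "v (m,1) = Inl a" by blast
          then have va: "v = nhat_of a" "0 < a" using Nhat_Inl[of v m a] v by auto
          then have "pi_mn (Suc N) (fact N) a = Inr (s (fact N))"
            using v pidx unfolding nhat_of_def by auto
          then have "N < a" "a mod fact N = s (fact N)" unfolding pi_mn_def by (auto split: if_splits)
          then have "dist ((f ^^ a) x) (Lf s) < e/2" using N by blast
          then show ?thesis using gk va e by simp
        next
          case False
          then have "\<And>m a. 0 < m \<Longrightarrow> v (m,1) \<noteq> Inl a" by blast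
          moreover have vN: "v \<in> Nhat" using v by blast
          ultimately have vt: "v = uhat (zh v)" "zh v \<in> Zhat" using Nhat_Inr[OF vN] by blast+
          define t where "t = zh v"
          have tZ: "t \<in> Zhat" using vt t_def by simp
          have "uhat t (Suc N, fact N) = Inr (s (fact N))" using v vt t_def by simp
          then have ts: "t (fact N) = s (fact N)" using pidx unfolding uhat_def by simp
          obtain c where c: "\<forall>i. 0 < c i" "filterlim c at_top sequentially"
              "\<forall>q>0. eventually (\<lambda>i. c i mod q = t q) sequentially"
            using Zhat_seq[OF tZ] by blast
          have lim: "((\<lambda>i. (f ^^ c i) x) \<longlonglongrightarrow> Lf t)" using LfH[OF tZ c(1,2,3)] .
          have "eventually (\<lambda>i. c i \<ge> Suc N) sequentially"
            using c(2) by (simp add: filterlim_at_top)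
          then have "eventually (\<lambda>i. c i > N) sequentially"
            by (rule eventually_mono) simp
          moreover have "eventually (\<lambda>i. c i mod fact N = t (fact N)) sequentially"
            using c(3) by simp
          ultimately have "eventually (\<lambda>i. dist ((f ^^ c i) x) (Lf s) \<le> e/2) sequentially"
            by eventually_elim (use N ts in \<open>auto intro: less_imp_le\<close>)
          then have "dist (Lf t) (Lf s) \<le> e/2"
            by (rule tendsto_upperbound[OF tendsto_dist[OF lim tendsto_const]]) simp
          moreover have "g v = Lf t" using gs[OF tZ] vt t_def by metis
          ultimately show ?thesis using e by simp
        qed
        then have "g v \<in> ball (g u) e" using gu by (simp add: dist_commute)
        then show "g v \<in> V" using e by blast
      qed
    qed
  qed auto
  then show "\<exists>g. continuous_map Nhat_top euclidean g \<and>
              (\<forall>k::nat. 0 < k \<longrightarrow> g (nhat_of k) = (f ^^ k) x)"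
    using gk by blast
qed

end
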